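(* Let $(\mathcal S,\mathcal A,P,r)$ be a finite MDP such that $\mathcal P^\pi g^\star=g^\star$ for every policy $\pi$, and let $(g^\star,h^\star)$ be a solution of the modified Bellman equations. Let $0<\lambda_j<1$ for $j\ge1$, $V^0\in\mathbb R^n$, $V^k=\lambda_kV^{k-1}+(1-\lambda_k)TV^{k-1}$ for $k\ge1$, and let $\pi_k$ be greedy policies, $T^{\pi_k}V^k=TV^k$. Then for every $k\ge1$, \[\|g^\star-g^{\pi_k}\|_\infty\le\|TV^k-V^k-g^\star\|_\infty\le\frac{2\|V^0-h^\star\|_\infty}{\sqrt{\varpi\sum_{i=1}^k\lambda_i(1-\lambda_i)}},\] where $\varpi=3.141592\ldots$ is the circle constant.
   Context: An MDP $(\mathcal S,\mathcal A,P,r)$ has finite state space $\mathcal S$ ($|\mathcal S|=n$, functions identified with $\mathbb R^n$), finite action space, transition probabilities $P(s'\mid s,a)$ and bounded reward $r$. For a policy $\pi$: $r^\pi(s)=\sum_a\pi(a\mid s)r(s,a)$, $\mathcal P^\pi(s,s')=\sum_a\pi(a\mid s)P(s'\mid s,a)$, $g^\pi(s)=\liminf_{T\to\infty}\frac1T\mathbb E_\pi[\sum_{t=0}^{T-1}r(s_t,a_t)\mid s_0=s]$, $g^\star=\max_\pi g^\pi$. $T^\pi V=r^\pi+\mathcal P^\pi V$, $(TV)(s)=\max_a\{r(s,a)+\sum_{s'}P(s'\mid s,a)V(s')\}$. A pair $(g,h)$ solves the modified Bellman equations if $\max_a\sum_{s'}P(s'\mid s,a)g(s')=g(s)$ and $\max_a\{r(s,a)+\sum_{s'}P(s'\mid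 s,a)h(s')\}=h(s)+g(s)$ for all $s$, with some policy attaining both maxima simultaneously; the first component of any solution equals $g^\star$. *)

theory Defs
  imports "HOL-Analysis.Analysis" "HOL-Library.Liminf_Limsup"
begin

definition is_mdp :: "('s::finite \<Rightarrow> 'a::finite \<Rightarrow> 's \<Rightarrow> real) \<Rightarrow> bool" where
  "is_mdp P \<longleftrightarrow> (\<forall>s a s'. 0 \<le> P s a s') \<and> (\<forall>s a. (\<Sum>s'\<in>UNIV. P s a s') = 1)"

text \<open>(Stationary, possibly randomized) policy pol s a = pi(a|s).\<close>
definition is_policy :: "('s::finite \<Rightarrow> 'a::finite \<Rightarrow> real) \<Rightarrow> bool" where
  "is_policy pol \<longleftrightarrow> (\<forall>s a. 0 \<le> pol s a) \<and> (\<forall>s. (\<Sum>a\<in>UNIV. pol s a) = 1)"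

definition r_pol :: "('s::finite \<Rightarrow> 'a::finite \<Rightarrow> real) \<Rightarrow> ('s \<Rightarrow> 'a \<Rightarrow> real) \<Rightarrow> 's \<Rightarrow> real" where
  "r_pol r pol s = (\<Sum>a\<in>UNIV. pol s a * r s a)"

definition P_pol :: "('s::finite \<Rightarrow> 'a::finite \<Rightarrow> 's \<Rightarrow> real) \<Rightarrow> ('s \<Rightarrow> 'a \<Rightarrow> real) \<Rightarrow> ('s \<Rightarrow> real) \<Rightarrow> 's \<Rightarrow> real" where
  "P_pol P pol V s = (\<Sum>a\<in>UNIV. pol s a * (\<Sum>s'\<in>UNIV. P s a s' * V s'))"

definition T_pol :: "('s::finite \<Rightarrow> 'a::finite \<Rightarrow> 's \<Rightarrow> real) \<Rightarrow> ('s \<Rightarrow> 'a \<Rightarrow> real) \<Rightarrow> ('s \<Rightarrow> 'a \<Rightarrow> real) \<Rightarrow> ('s \<Rightarrow> real) \<Rightarrow> 's \<Rightarrow> real" where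
  "T_pol P r pol V s = r_pol r pol s + P_pol P pol V s"

definition T_op :: "('s::finite \<Rightarrow> 'a::finite \<Rightarrow> 's \<Rightarrow> real) \<Rightarrow> ('s \<Rightarrow> 'a \<Rightarrow> real) \<Rightarrow> ('s \<Rightarrow> real) \<Rightarrow> 's \<Rightarrow> real" where
  "T_op P r V s = (MAX a\<in>UNIV. r s a + (\<Sum>s'\<in>UNIV. P s a s' * V s'))"

text \<open>Gain g^pi(s) = liminf_T (1/T) E_pi[sum_{t<T} r(s_t,a_t) | s_0 = s]
  = liminf_T (1/T) sum_{t<T} ((P^pi)^t r^pi)(s) for a stationary Markov policy.\<close>
definition gain :: "('s::finite \<Rightarrow> 'a::finite \<Rightarrow> 's \<Rightarrow> real) \<Rightarrow> ('s \<Rightarrow> 'a \<Rightarrow> real) \<Rightarrow> ('s \<Rightarrow> 'a \<Rightarrow> real) \<Rightarrow> 's \<Rightarrow> real" where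
  "gain P r pol s = real_of_ereal (liminf (\<lambda>T::nat.
      ereal ((1 / real T) * (\<Sum>t<T. ((P_pol P pol ^^ t) (r_pol r pol)) s))))"

definition gstar :: "('s::finite \<Rightarrow> 'a::finite \<Rightarrow> 's \<Rightarrow> real) \<Rightarrow> ('s \<Rightarrow> 'a \<Rightarrow> real) \<Rightarrow> 's \<Rightarrow> real" where
  "gstar P r s = (SUP pol\<in>{pol. is_policy pol}. gain P r pol s)"

definition modified_bellman :: "('s::finite \<Rightarrow> 'a::finite \<Rightarrow> 's \<Rightarrow> real) \<Rightarrow> ('s \<Rightarrow> 'a \<Rightarrow> real) \<Rightarrow> ('s \<Rightarrow> real) \<Rightarrow> ('s \<Rightarrow> real) \<Rightarrow> bool" where
  "modified_bellman P r g h \<longleftrightarrow>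
     (\<forall>s. (MAX a\<in>UNIV. (\<Sum>s'\<in>UNIV. P s a s' * g s')) = g s) \<and>
     (\<forall>s. (MAX a\<in>UNIV. r s a + (\<Sum>s'\<in>UNIV. P s a s' * h s')) = h s + g s) \<and>
     (\<forall>s. \<exists>a. (\<Sum>s'\<in>UNIV. P s a s' * g s') = g s \<and>
              r s a + (\<Sum>s'\<in>UNIV. P s a s' * h s') = h s + g s)"

definition sup_norm :: "('s::finite \<Rightarrow> real) \<Rightarrow> real" where
  "sup_norm V = (MAX s\<in>UNIV. \<bar>V s\<bar>)"

end

theory Submission
  imports Defs "HOL-Probability.Probability"
begin


definition Aop :: "real \<Rightarrow> (int \<Rightarrow> real) \<Rightarrow> int \<Rightarrow> real" where
  "Aop q f s = q * f (s+1) + q * f (s-1) + (1 - 2*q) * f s"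

primrec Eop :: "(nat \<Rightarrow> real) \<Rightarrow> nat \<Rightarrow> (int \<Rightarrow> real) \<Rightarrow> real" where
  "Eop p 0 f = f 0"
| "Eop p (Suc n) f = Eop p n (Aop (p (Suc n)) f)"

definition Vind :: "int \<Rightarrow> int \<Rightarrow> real" where
  "Vind y s = (if 1 - y \<le> s \<and> s \<le> y then 1 else 0)"

primrec EXv :: "(nat \<Rightarrow> real) \<Rightarrow> nat \<Rightarrow> nat \<Rightarrow> int \<Rightarrow> int \<Rightarrow> real" where
  "EXv mu m 0 y s = Vind y s"
| "EXv mu m (Suc n) y s = (if Suc n \<le> m then Vind y s
      else (1 - mu (Suc n)) * EXv mu m n y s + mu (Suc n) * EXv mu m n (y+1) s)"

definition Hb :: "(nat \<Rightarrow> real) \<Rightarrow> nat \<Rightarrow> nat \<Rightarrow> int \<Rightarrow> real" where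
  "Hb mu m n y = Eop (\<lambda>j. mu j * (1 - mu j)) m (EXv mu m n y)"

lemma Eop_lin: "Eop p n (\<lambda>s. a * f s + b * g s) = a * Eop p n f + b * Eop p n g"
proof (induction n arbitrary: f g)
  case 0 then show ?case by simp
next
  case (Suc n)
  have "Aop (p (Suc n)) (\<lambda>s. a * f s + b * g s) = (\<lambda>s. a * Aop (p (Suc n)) f s + b * Aop (p (Suc n)) g s)"
    by (rule ext) (simp add: Aop_def algebra_simps)
  then show ?case using Suc by simp
qed

lemma Eop_cong: "(\<And>s. f s = g s) \<Longrightarrow> Eop p n f = Eop p n g"
  by (metis ext)

lemma Eop_zero: "Eop p n (\<lambda>s. 0) = 0"
  using Eop_lin[of p n 0 "\<lambda>s. 0" 0 "\<lambda>s. 0"] by simp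

lemma EXv_below: "n \<le> m \<Longrightarrow> EXv mu m n y s = Vind y s"
  by (induction n) auto

lemma EXv_one: "1 - y \<le> s \<Longrightarrow> s \<le> y \<Longrightarrow> EXv mu m n y s = 1"
proof (induction n arbitrary: y)
  case 0 then show ?case by (simp add: Vind_def)
next
  case (Suc n)
  have "EXv mu m n (y+1) s = 1" using Suc.prems by (intro Suc.IH) auto
  then show ?case using Suc by (auto simp: Vind_def algebra_simps)
qed

lemma Vind_harm: "y \<ge> 1 \<Longrightarrow> Vind y (s+1) + Vind y (s-1) = Vind (y+1) s + Vind (y-1) s"
  unfolding Vind_def by (split if_split)+ linarith

lemma EXv_harm: "y \<ge> 1 \<Longrightarrow> EXv mu m n y (s+1) + EXv mu m n y (s-1) = EXv mu m n (y+1) s + EXv mu m n (y-1) s"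
proof (induction n arbitrary: y)
  case 0 then show ?case using Vind_harm by simp
next
  case (Suc n)
  show ?case
  proof (cases "Suc n \<le> m")
    case True then show ?thesis using Vind_harm Suc.prems by simp
  next
    case False
    have a: "EXv mu m n y (s+1) + EXv mu m n y (s-1) = EXv mu m n (y+1) s + EXv mu m n (y-1) s"
      using Suc by blast
    have b: "EXv mu m n (y+1) (s+1) + EXv mu m n (y+1) (s-1) = EXv mu m n (y+1+1) s + EXv mu m n (y+1-1) s"
      using Suc.prems by (intro Suc.IH) auto
    have e: "\<And>y' t. EXv mu m (Suc n) y' t = (1 - mu (Suc n)) * EXv mu m n y' t + mu (Suc n) * EXv mu m n (y'+1) t"
      using False by simp
    have "EXv mu m (Suc n) y (s+1) + EXv mu m (Suc n) y (s-1)
       = (1 - mu (Suc n)) * (EXv mu m n y (s+1) + EXv mu m n y (s-1)) + mu (Suc n) * (EXv mu m n (y+1) (s+1) + EXv mu m n (y+1) (s-1))"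
      by (simp only: e) (simp add: algebra_simps)
    also have "\<dots> = (1 - mu (Suc n)) * (EXv mu m n (y+1) s + EXv mu m n (y-1) s) + mu (Suc n) * (EXv mu m n (y+1+1) s + EXv mu m n (y+1-1) s)"
      by (simp only: a b)
    also have "\<dots> = EXv mu m (Suc n) (y+1) s + EXv mu m (Suc n) (y-1) s"
      by (simp only: e) (simp add: algebra_simps)
    finally show ?thesis .
  qed
qed

lemma EXv_peel: "Suc m \<le> n \<Longrightarrow>
   EXv mu m n y s = (1 - mu (Suc m)) * EXv mu (Suc m) n y s + mu (Suc m) * EXv mu (Suc m) n (y+1) s"
proof (induction n arbitrary: y)
  case 0 then show ?case by simp
next
  case (Suc n)
  show ?case
  proof (cases "Suc m = Suc n")
    case True
    then show ?thesis by (simp add: EXv_below)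
  next
    case False
    then have le: "Suc m \<le> n" using Suc.prems by simp
    have i1: "EXv mu m n y s = (1 - mu (Suc m)) * EXv mu (Suc m) n y s + mu (Suc m) * EXv mu (Suc m) n (y+1) s"
      using Suc.IH[OF le] .
    have i2: "EXv mu m n (y+1) s = (1 - mu (Suc m)) * EXv mu (Suc m) n (y+1) s + mu (Suc m) * EXv mu (Suc m) n (y+1+1) s"
      using Suc.IH[OF le] .
    have nm: "\<not> Suc n \<le> m" "\<not> Suc n \<le> Suc m" using le False by auto
    show ?thesis unfolding EXv.simps if_not_P[OF nm(1)] if_not_P[OF nm(2)] i1 i2
      by (simp add: algebra_simps)
  qed
qed

lemma Hb_R1: "m < Suc n \<Longrightarrow> Hb mu m (Suc n) y = (1 - mu (Suc n)) * Hb mu m n y + mu (Suc n) * Hb mu m n (y+1)"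
proof -
  assume "m < Suc n"
  then have "EXv mu m (Suc n) y = (\<lambda>s. (1 - mu (Suc n)) * EXv mu m n y s + mu (Suc n) * EXv mu m n (y+1) s)"
    by (intro ext) simp
  then show ?thesis unfolding Hb_def by (simp add: Eop_lin)
qed

lemma Hb_R2: "Suc m \<le> n \<Longrightarrow> Hb mu (Suc m) n 1 = (1 - mu (Suc m)) * Hb mu m n 1 + mu (Suc m) * Hb mu m n 0"
proof -
  assume le: "Suc m \<le> n"
  define q where "q = mu (Suc m)"
  define p where "p = (\<lambda>j. mu j * (1 - mu j))"
  define E where "E = EXv mu (Suc m) n"
  have pq: "p (Suc m) = q * (1 - q)" by (simp add: p_def q_def)
  have h: "E 1 (s+1) + E 1 (s-1) = E 2 s + E 0 s" for s
    using EXv_harm[of 1 mu "Suc m" n s] by (simp add: E_def)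
  have A: "Aop (p (Suc m)) (E 1) = (\<lambda>s. (1 - q) * ((1 - q) * E 1 s + q * E 2 s) + q * ((1 - q) * E 0 s + q * E 1 s))"
  proof
    fix s
    have "Aop (p (Suc m)) (E 1) s = q * (1 - q) * (E 1 (s+1) + E 1 (s-1)) + (1 - 2 * (q * (1 - q))) * E 1 s"
      unfolding Aop_def pq by (simp add: algebra_simps)
    also have "\<dots> = q * (1 - q) * (E 2 s + E 0 s) + (1 - 2 * (q * (1 - q))) * E 1 s" by (simp only: h)
    finally show "Aop (p (Suc m)) (E 1) s = (1 - q) * ((1 - q) * E 1 s + q * E 2 s) + q * ((1 - q) * E 0 s + q * E 1 s)"
      by (simp add: algebra_simps)
  qed
  have P1: "EXv mu m n 1 = (\<lambda>s. (1 - q) * E 1 s + q * E 2 s)"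
    using EXv_peel[OF le, of mu 1] by (intro ext) (simp add: E_def q_def)
  have P0: "EXv mu m n 0 = (\<lambda>s. (1 - q) * E 0 s + q * E 1 s)"
    using EXv_peel[OF le, of mu 0] by (intro ext) (simp add: E_def q_def)
  have "Hb mu (Suc m) n 1 = Eop p m (Aop (p (Suc m)) (E 1))"
    by (simp add: Hb_def p_def E_def)
  also have "\<dots> = (1 - q) * Eop p m (\<lambda>s. (1 - q) * E 1 s + q * E 2 s) + q * Eop p m (\<lambda>s. (1 - q) * E 0 s + q * E 1 s)"
    unfolding A by (rule Eop_lin)
  also have "\<dots> = (1 - q) * Hb mu m n 1 + q * Hb mu m n 0"
    by (simp add: Hb_def P1 P0 p_def)
  finally show ?thesis by (simp add: q_def)
qed

lemma Hb_diag0: "Hb mu m m 0 = 0"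
proof -
  have "EXv mu m m 0 = (\<lambda>s. 0)" by (intro ext) (simp add: EXv_below Vind_def)
  then show ?thesis by (simp add: Hb_def Eop_zero)
qed

lemma Hb_zero1: "Hb mu 0 n 1 = 1"
  by (simp add: Hb_def EXv_one)

lemma Hb_diag1: "Hb mu n n 1 = Eop (\<lambda>j. mu j * (1 - mu j)) n (Vind 1)"
proof -
  have "EXv mu n n 1 = Vind 1" by (intro ext) (simp add: EXv_below)
  then show ?thesis by (simp add: Hb_def)
qed

lemma sn_ge: "\<bar>f s\<bar> \<le> sup_norm (f :: 's::finite \<Rightarrow> real)"
  unfolding sup_norm_def by (rule Max_ge) auto

lemma sn_le: "(\<And>s. \<bar>f s\<bar> \<le> B) \<Longrightarrow> sup_norm (f :: 's::finite \<Rightarrow> real) \<le> B"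
  unfolding sup_norm_def by (subst Max_le_iff) auto

lemma sn_nonneg: "0 \<le> sup_norm (f :: 's::finite \<Rightarrow> real)"
  using sn_ge[of f undefined] by linarith

lemma sn_comb:
  fixes f g :: "'s::finite \<Rightarrow> real"
  assumes "0 \<le> a" "0 \<le> b"
  shows "sup_norm (\<lambda>s. a * f s + b * g s) \<le> a * sup_norm f + b * sup_norm g"
proof (rule sn_le)
  fix s
  have "\<bar>a * f s + b * g s\<bar> \<le> a * \<bar>f s\<bar> + b * \<bar>g s\<bar>"
    using assms by (simp add: abs_mult abs_triangle_ineq[THEN order_trans])
  also have "\<dots> \<le> a * sup_norm f + b * sup_norm g"
    using assms by (intro add_mono mult_left_mono sn_ge) auto
  finally show "\<bar>a * f s + b * g s\<bar> \<le> a * sup_norm f + b * sup_norm g" .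
qed

lemma sn_tri:
  fixes f g :: "'s::finite \<Rightarrow> real"
  shows "sup_norm (\<lambda>s. f s + g s) \<le> sup_norm f + sup_norm g"
  using sn_comb[of 1 1 f g] by simp

lemma sn_sym: "sup_norm (\<lambda>s. f s - g s) = sup_norm (\<lambda>s. g s - (f s::real))"
  unfolding sup_norm_def by (simp add: abs_minus_commute)

lemma KM:
  fixes F :: "('s::finite \<Rightarrow> real) \<Rightarrow> ('s \<Rightarrow> real)" and x :: "nat \<Rightarrow> 's \<Rightarrow> real"
  assumes ne: "\<And>U W. sup_norm (\<lambda>s. F U s - F W s) \<le> sup_norm (\<lambda>s. U s - W s)"
    and fx: "F h = h"
    and rec: "\<And>k. x (Suc k) = (\<lambda>s. (1 - mu (Suc k)) * x k s + mu (Suc k) * F (x k) s)"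
    and mu: "\<And>j. 0 \<le> mu j \<and> mu j \<le> 1"
  shows "sup_norm (\<lambda>s. F (x n) s - x n s) \<le> 2 * sup_norm (\<lambda>s. x 0 s - h s) * Hb mu n n 1"
proof -
  define R where "R = sup_norm (\<lambda>s. x 0 s - h s)"
  have R0: "0 \<le> R" unfolding R_def by (rule sn_nonneg)
  have bx: "sup_norm (\<lambda>s. x k s - h s) \<le> R" for k
  proof (induction k)
    case 0 then show ?case by (simp add: R_def)
  next
    case (Suc k)
    have e: "(\<lambda>s. x (Suc k) s - h s) = (\<lambda>s. (1 - mu (Suc k)) * (x k s - h s) + mu (Suc k) * (F (x k) s - F h s))"
      by (rule ext) (simp add: rec fx algebra_simps)
    have "sup_norm (\<lambda>s. x (Suc k) s - h s) \<le> (1 - mu (Suc k)) * sup_norm (\<lambda>s. x k s - h s) + mu (Suc k) * sup_norm (\<lambda>s. F (x k) s - F h s)"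
      unfolding e using mu[of "Suc k"] by (intro sn_comb) auto
    also have "\<dots> \<le> (1 - mu (Suc k)) * R + mu (Suc k) * R"
      using mu[of "Suc k"] Suc ne[of "x k" h] by (intro add_mono mult_left_mono) auto
    finally show ?case by (simp add: algebra_simps)
  qed
  have bF: "sup_norm (\<lambda>s. F (x k) s - h s) \<le> R" for k
    using ne[of "x k" h] bx[of k] fx by simp
  have main: "\<forall>m n. m \<le> n \<longrightarrow> m + n = N \<longrightarrow>
      sup_norm (\<lambda>s. x n s - x m s) \<le> 2 * R * Hb mu m n 0 \<and>
      sup_norm (\<lambda>s. F (x n) s - x m s) \<le> 2 * R * Hb mu m n 1" for N
  proof (induction N rule: less_induct)
    case (less N)
    show ?case
    proof (intro allI impI)
      fix m n assume mn: "m \<le> n" and N: "m + n = N"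
      have c1: "sup_norm (\<lambda>s. x n s - x m s) \<le> 2 * R * Hb mu m n 0"
      proof (cases "m = n")
        case True then show ?thesis by (simp add: Hb_diag0 sup_norm_def)
      next
        case False
        then obtain n' where n': "n = Suc n'" "m \<le> n'" using mn by (cases n) auto
        have IH: "sup_norm (\<lambda>s. x n' s - x m s) \<le> 2 * R * Hb mu m n' 0 \<and>
            sup_norm (\<lambda>s. F (x n') s - x m s) \<le> 2 * R * Hb mu m n' 1"
          using less.IH[of "m + n'"] n' N by auto
        have e: "(\<lambda>s. x n s - x m s) = (\<lambda>s. (1 - mu n) * (x n' s - x m s) + mu n * (F (x n') s - x m s))"
          by (rule ext) (simp add: n' rec algebra_simps)
        have "sup_norm (\<lambda>s. x n s - x m s) \<le> (1 - mu n) * sup_norm (\<lambda>s. x n' s - x m s) + mu n * sup_norm (\<lambda>s. F (x n') s - x m s)"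
          unfolding e using mu[of n] by (intro sn_comb) auto
        also have "\<dots> \<le> (1 - mu n) * (2 * R * Hb mu m n' 0) + mu n * (2 * R * Hb mu m n' 1)"
          using IH mu[of n] by (intro add_mono mult_left_mono) auto
        also have "\<dots> = 2 * R * ((1 - mu n) * Hb mu m n' 0 + mu n * Hb mu m n' 1)"
          by (simp add: algebra_simps)
        also have "\<dots> = 2 * R * Hb mu m n 0"
          using Hb_R1[of m n' mu 0] n' by simp
        finally show ?thesis .
      qed
      have c2: "sup_norm (\<lambda>s. F (x n) s - x m s) \<le> 2 * R * Hb mu m n 1"
      proof (cases m)
        case 0
        have e: "(\<lambda>s. F (x n) s - x m s) = (\<lambda>s. (F (x n) s - h s) + (h s - x 0 s))"
          by (rule ext) (simp add: 0)
        have "sup_norm (\<lambda>s. F (x n) s - x m s) \<le> sup_norm (\<lambda>s. F (x n) s - h s) + sup_norm (\<lambda>s. h s - x 0 s)"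
          unfolding e by (rule sn_tri)
        also have "\<dots> \<le> R + R" using bF[of n] sn_sym[of h "x 0"] R_def by simp
        finally show ?thesis by (simp add: 0 Hb_zero1)
      next
        case (Suc m')
        have IH: "sup_norm (\<lambda>s. x n s - x m' s) \<le> 2 * R * Hb mu m' n 0 \<and>
            sup_norm (\<lambda>s. F (x n) s - x m' s) \<le> 2 * R * Hb mu m' n 1"
          using less.IH[of "m' + n"] Suc N mn by auto
        have e: "(\<lambda>s. F (x n) s - x m s) = (\<lambda>s. (1 - mu m) * (F (x n) s - x m' s) + mu m * (F (x n) s - F (x m') s))"
          by (rule ext) (simp add: Suc rec algebra_simps)
        have "sup_norm (\<lambda>s. F (x n) s - x m s) \<le> (1 - mu m) * sup_norm (\<lambda>s. F (x n) s - x m' s) + mu m * sup_norm (\<lambda>s. F (x n) s - F (x m') s)"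
          unfolding e using mu[of m] by (intro sn_comb) auto
        also have "\<dots> \<le> (1 - mu m) * (2 * R * Hb mu m' n 1) + mu m * (2 * R * Hb mu m' n 0)"
          using IH mu[of m] ne[of "x n" "x m'"] by (intro add_mono mult_left_mono) auto
        also have "\<dots> = 2 * R * ((1 - mu m) * Hb mu m' n 1 + mu m * Hb mu m' n 0)"
          by (simp add: algebra_simps)
        also have "\<dots> = 2 * R * Hb mu m n 1"
          using Hb_R2[of m' n mu] Suc mn by simp
        finally show ?thesis .
      qed
      show "sup_norm (\<lambda>s. x n s - x m s) \<le> 2 * R * Hb mu m n 0 \<and>
          sup_norm (\<lambda>s. F (x n) s - x m s) \<le> 2 * R * Hb mu m n 1" using c1 c2 by blast
    qed
  qed
  show ?thesis using main[of "n + n"] by (simp add: R_def)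
qed



lemma Eop_cosK: "Eop p n (\<lambda>s. K * cos (of_int s * \<theta> + \<alpha>)) = K * (\<Prod>j=1..n. 1 - 2 * p j * (1 - cos \<theta>)) * cos \<alpha>"
proof (induction n arbitrary: K)
  case 0 then show ?case by simp
next
  case (Suc n)
  have A: "Aop (p (Suc n)) (\<lambda>s. K * cos (of_int s * \<theta> + \<alpha>)) = (\<lambda>s. (K * (1 - 2 * p (Suc n) * (1 - cos \<theta>))) * cos (of_int s * \<theta> + \<alpha>))"
  proof
    fix s :: int
    have "cos (of_int (s+1) * \<theta> + \<alpha>) + cos (of_int (s-1) * \<theta> + \<alpha>) = 2 * cos (of_int s * \<theta> + \<alpha>) * cos \<theta>"
    proof -
      have "cos (of_int (s+1) * \<theta> + \<alpha>) = cos ((of_int s * \<theta> + \<alpha>) + \<theta>)" by (simp add: algebra_simps)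
      moreover have "cos (of_int (s-1) * \<theta> + \<alpha>) = cos ((of_int s * \<theta> + \<alpha>) - \<theta>)" by (simp add: algebra_simps)
      ultimately show ?thesis by (simp only: cos_add cos_diff)
    qed
    then show "Aop (p (Suc n)) (\<lambda>s. K * cos (of_int s * \<theta> + \<alpha>)) s = (K * (1 - 2 * p (Suc n) * (1 - cos \<theta>))) * cos (of_int s * \<theta> + \<alpha>)"
      unfolding Aop_def by (simp add: algebra_simps) (smt (verit, best) distrib_left mult.assoc mult.commute)
  qed
  have "Eop p (Suc n) (\<lambda>s. K * cos (of_int s * \<theta> + \<alpha>)) = Eop p n (\<lambda>s. (K * (1 - 2 * p (Suc n) * (1 - cos \<theta>))) * cos (of_int s * \<theta> + \<alpha>))"
    by (simp only: Eop.simps A)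
  also have "\<dots> = (K * (1 - 2 * p (Suc n) * (1 - cos \<theta>))) * (\<Prod>j=1..n. 1 - 2 * p j * (1 - cos \<theta>)) * cos \<alpha>"
    by (rule Suc.IH)
  also have "\<dots> = K * (\<Prod>j=1..Suc n. 1 - 2 * p j * (1 - cos \<theta>)) * cos \<alpha>"
    by (simp add: prod.cl_ivl_Suc)
  finally show ?case .
qed

lemma Eop_cos: "Eop p n (\<lambda>s. cos (of_int s * \<theta> + \<alpha>)) = (\<Prod>j=1..n. 1 - 2 * p j * (1 - cos \<theta>)) * cos \<alpha>"
  using Eop_cosK[of p n 1 \<theta> \<alpha>] by simp

lemma Eop_integral:
  assumes "\<And>s. g s integrable_on S"
  shows "Eop p n (\<lambda>s. integral S (g s)) = integral S (\<lambda>\<theta>. Eop p n (\<lambda>s. g s \<theta>))"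
  using assms
proof (induction n arbitrary: g)
  case 0 then show ?case by simp
next
  case (Suc n)
  define q where "q = p (Suc n)"
  define g' where "g' = (\<lambda>s \<theta>. Aop q (\<lambda>s'. g s' \<theta>) s)"
  have cm: "(\<lambda>x. c * g s x) integrable_on S" for c s
    using integrable_on_cmult_left[OF Suc.prems[of s], of c] by simp
  have int': "g' s integrable_on S" for s
    unfolding g'_def Aop_def
    by (intro integrable_add cm)
  have A: "Aop q (\<lambda>s. integral S (g s)) = (\<lambda>s. integral S (g' s))"
  proof
    fix s
    have "integral S (g' s) = integral S (\<lambda>\<theta>. q * g (s+1) \<theta> + q * g (s-1) \<theta>) + integral S (\<lambda>\<theta>. (1 - 2*q) * g s \<theta>)"
      unfolding g'_def Aop_def
      by (intro integral_add integrable_add cm)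
    also have "\<dots> = q * integral S (g (s+1)) + q * integral S (g (s-1)) + (1 - 2*q) * integral S (g s)"
      by (subst integral_add) (auto intro: cm)
    finally show "Aop q (\<lambda>s. integral S (g s)) s = integral S (g' s)" unfolding Aop_def by simp
  qed
  have "Eop p (Suc n) (\<lambda>s. integral S (g s)) = Eop p n (\<lambda>s. integral S (g' s))"
    by (simp add: A[symmetric] q_def)
  also have "\<dots> = integral S (\<lambda>\<theta>. Eop p n (\<lambda>s. g' s \<theta>))" by (rule Suc.IH[OF int'])
  also have "\<dots> = integral S (\<lambda>\<theta>. Eop p (Suc n) (\<lambda>s. g s \<theta>))"
    by (simp add: g'_def q_def)
  finally show ?case .
qed

lemma gauss_bound:
  fixes a :: real assumes a: "a > 0"
  shows "integral {-1..1} (\<lambda>y. exp (- a * y\<^sup>2)) \<le> sqrt (pi / a)"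
proof -
  define s0 where "s0 = 1 / sqrt (2 * a)"
  have s2: "s0\<^sup>2 = 1 / (2 * a)" using a by (simp add: s0_def power_divide)
  have nd: "exp (- a * y\<^sup>2) = sqrt (pi / a) * normal_density 0 s0 y" for y
  proof -
    have "2 * pi * s0\<^sup>2 = pi / a" using a by (simp add: s2)
    moreover have "-(y - 0)\<^sup>2 / (2 * s0\<^sup>2) = - a * y\<^sup>2" using a by (simp add: s2)
    ultimately show ?thesis using a by (simp add: normal_density_def)
  qed
  have ext1: "(\<lambda>y. exp (- a * y\<^sup>2)) = (\<lambda>y. sqrt (pi / a) * normal_density 0 s0 y)"
    using nd by auto
  have s0pos: "0 < s0" using a by (simp add: s0_def)
  have I: "integrable lborel (\<lambda>y. exp (- a * y\<^sup>2))"
    unfolding ext1 using s0pos by simp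
  have V: "(\<integral>y. exp (- a * y\<^sup>2) \<partial>lborel) = sqrt (pi / a)"
    unfolding ext1 using s0pos by simp
  have H: "((\<lambda>y. exp (- a * y\<^sup>2)) has_integral sqrt (pi / a)) UNIV"
    using has_integral_integral_lborel[OF I] V by simp
  have "integral {-1..1} (\<lambda>y. exp (- a * y\<^sup>2)) \<le> integral UNIV (\<lambda>y. exp (- a * y\<^sup>2))"
    using H by (intro integral_subset_le integrable_continuous_interval) (auto intro!: continuous_intros)
  also have "\<dots> = sqrt (pi / a)" using H by (rule integral_unique)
  finally show ?thesis .
qed

lemma Vind1_integral:
  "Vind 1 s = integral {-pi..pi} (\<lambda>\<theta>. (1 / (2*pi)) * cos (of_int s * \<theta> + 0) + (1 / (2*pi)) * cos (of_int s * \<theta> + - \<theta>))"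
proof -
  have e: "of_int s * \<theta> + - \<theta> = of_int (s - 1) * \<theta>" for \<theta> :: real by (simp add: algebra_simps)
  have "((\<lambda>\<theta>. (1 / (2*pi)) * cos (of_int s * \<theta> + 0) + (1 / (2*pi)) * cos (of_int s * \<theta> + - \<theta>)) has_integral
      (1 / (2*pi)) * (if s = 0 then 2 * pi else 0) + (1 / (2*pi)) * (if s - 1 = 0 then 2 * pi else 0)) {-pi..pi}"
    unfolding e add_0_right by (intro has_integral_add has_integral_mult_right has_integral_cos_nx)
  then have "integral {-pi..pi} (\<lambda>\<theta>. (1 / (2*pi)) * cos (of_int s * \<theta> + 0) + (1 / (2*pi)) * cos (of_int s * \<theta> + - \<theta>))
     = (1 / (2*pi)) * (if s = 0 then 2 * pi else 0) + (1 / (2*pi)) * (if s - 1 = 0 then 2 * pi else 0)"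
    by (rule integral_unique)
  then show ?thesis by (auto simp: Vind_def)
qed

lemma Eop_Vind1:
  "Eop p n (Vind 1) = integral {-pi..pi} (\<lambda>\<theta>. (\<Prod>j=1..n. 1 - 2 * p j * (1 - cos \<theta>)) * (1 + cos \<theta>) / (2 * pi))"
proof -
  have "Eop p n (Vind 1) = Eop p n (\<lambda>s. integral {-pi..pi} (\<lambda>\<theta>. (1 / (2*pi)) * cos (of_int s * \<theta> + 0) + (1 / (2*pi)) * cos (of_int s * \<theta> + - \<theta>)))"
    by (rule Eop_cong) (rule Vind1_integral)
  also have "\<dots> = integral {-pi..pi} (\<lambda>\<theta>. Eop p n (\<lambda>s. (1 / (2*pi)) * cos (of_int s * \<theta> + 0) + (1 / (2*pi)) * cos (of_int s * \<theta> + - \<theta>)))"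
    by (rule Eop_integral) (intro integrable_continuous_interval continuous_intros)
  also have "\<dots> = integral {-pi..pi} (\<lambda>\<theta>. (\<Prod>j=1..n. 1 - 2 * p j * (1 - cos \<theta>)) * (1 + cos \<theta>) / (2 * pi))"
  proof (rule integral_cong)
    fix \<theta> :: real
    have "Eop p n (\<lambda>s. (1 / (2*pi)) * cos (of_int s * \<theta> + 0) + (1 / (2*pi)) * cos (of_int s * \<theta> + - \<theta>))
      = (1 / (2*pi)) * Eop p n (\<lambda>s. cos (of_int s * \<theta> + 0)) + (1 / (2*pi)) * Eop p n (\<lambda>s. cos (of_int s * \<theta> + - \<theta>))"
      by (rule Eop_lin)
    also have "\<dots> = (1 / (2*pi)) * ((\<Prod>j=1..n. 1 - 2 * p j * (1 - cos \<theta>)) * cos 0) + (1 / (2*pi)) * ((\<Prod>j=1..n. 1 - 2 * p j * (1 - cos \<theta>)) * cos (- \<theta>))"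
      by (simp only: Eop_cos)
    also have "\<dots> = (\<Prod>j=1..n. 1 - 2 * p j * (1 - cos \<theta>)) * (1 + cos \<theta>) / (2 * pi)"
      by (simp add: algebra_simps add_divide_distrib)
    finally show "Eop p n (\<lambda>s. (1 / (2*pi)) * cos (of_int s * \<theta> + 0) + (1 / (2*pi)) * cos (of_int s * \<theta> + - \<theta>))
      = (\<Prod>j=1..n. 1 - 2 * p j * (1 - cos \<theta>)) * (1 + cos \<theta>) / (2 * pi)" .
  qed
  finally show ?thesis .
qed

lemma int_bound:
  fixes p :: "nat \<Rightarrow> real" and \<sigma> :: real
  assumes p: "\<And>j. 0 \<le> p j \<and> p j \<le> 1/4" and sig: "\<sigma> = (\<Sum>j=1..n. p j)" and sigpos: "\<sigma> > 0"
  shows "integral {-pi..pi} (\<lambda>\<theta>. (\<Prod>j=1..n. 1 - 2 * p j * (1 - cos \<theta>)) * (1 + cos \<theta>) / (2 * pi)) \<le> 1 / sqrt (pi * \<sigma>)"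
proof -
  define f where "f = (\<lambda>\<theta>. (\<Prod>j=1..n. 1 - 2 * p j * (1 - cos \<theta>)) * (1 + cos \<theta>) / (2 * pi))"
  define e where "e = (\<lambda>y::real. exp (- (4 * \<sigma>) * y\<^sup>2))"
  define g where "g = (\<lambda>\<theta>. exp (- (4 * \<sigma>) * (sin (\<theta> / 2))\<^sup>2) * cos (\<theta> / 2) / pi)"
  have fg: "f \<theta> \<le> g \<theta>" if th: "\<theta> \<in> {-pi..pi}" for \<theta>
  proof -
    define c where "c = cos \<theta>"
    have c1: "0 \<le> 1 - c" "1 - c \<le> 2" using cos_le_one[of \<theta>] cos_ge_minus_one[of \<theta>] by (auto simp: c_def)
    have "(\<Prod>j=1..n. 1 - 2 * p j * (1 - c)) \<le> (\<Prod>j=1..n. exp (- 2 * p j * (1 - c)))"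
    proof (rule prod_mono)
      fix j
      have "2 * p j * (1 - c) \<le> 2 * (1/4) * 2" using p[of j] c1 by (intro mult_mono) auto
      then show "0 \<le> 1 - 2 * p j * (1 - c) \<and> 1 - 2 * p j * (1 - c) \<le> exp (- 2 * p j * (1 - c))"
        using exp_ge_add_one_self[of "- 2 * p j * (1 - c)"] by auto
    qed
    also have "\<dots> = exp (\<Sum>j=1..n. - 2 * p j * (1 - c))" by (simp add: exp_sum)
    also have "(\<Sum>j=1..n. - 2 * p j * (1 - c)) = - 2 * \<sigma> * (1 - c)"
      by (simp add: sig sum_distrib_right sum_distrib_left algebra_simps)
    finally have P: "(\<Prod>j=1..n. 1 - 2 * p j * (1 - c)) \<le> exp (- 2 * \<sigma> * (1 - c))" .
    have cs: "c = 1 - 2 * (sin (\<theta>/2))\<^sup>2" "c = 2 * (cos (\<theta>/2))\<^sup>2 - 1"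
      using cos_double_sin[of "\<theta>/2"] cos_double_cos[of "\<theta>/2"] by (simp_all add: c_def)
    have cpos: "0 \<le> cos (\<theta>/2)" using th by (intro cos_ge_zero) auto
    have cle: "cos (\<theta>/2) \<le> 1" by simp
    have sq: "(cos (\<theta>/2))\<^sup>2 \<le> cos (\<theta>/2)" using cpos cle by (simp add: power2_eq_square mult_left_le)
    have "f \<theta> = (\<Prod>j=1..n. 1 - 2 * p j * (1 - c)) * (1 + c) / (2 * pi)" by (simp add: f_def c_def)
    also have "\<dots> \<le> exp (- 2 * \<sigma> * (1 - c)) * (1 + c) / (2 * pi)"
      using P c1 cs cpos by (intro divide_right_mono mult_right_mono) (auto simp: cs)
    also have "\<dots> = exp (- (4 * \<sigma>) * (sin (\<theta> / 2))\<^sup>2) * (cos (\<theta>/2))\<^sup>2 / pi"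
    proof -
      have a1: "1 - c = 2 * (sin (\<theta> / 2))\<^sup>2" using cs(1) by simp
      have a2: "- 2 * \<sigma> * (1 - c) = - (4 * \<sigma>) * (sin (\<theta> / 2))\<^sup>2" unfolding a1 by simp
      have a3: "1 + c = 2 * (cos (\<theta>/2))\<^sup>2" using cs(2) by simp
      show ?thesis unfolding a2 a3 by simp
    qed
    also have "\<dots> \<le> g \<theta>" unfolding g_def using sq by (intro divide_right_mono mult_left_mono) auto
    finally show ?thesis .
  qed
  have econt: "continuous_on {-1..1} e" unfolding e_def by (intro continuous_intros)
  define F where "F = (\<lambda>\<theta>. (2 / pi) * integral {-1..sin (\<theta> / 2)} e)"
  have G: "(g has_integral (F pi - F (-pi))) {-pi..pi}"
  proof (rule fundamental_theorem_of_calculus)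
    fix x assume x: "x \<in> {-pi..pi}"
    have sx: "sin (x/2) \<in> {-1..1}" using sin_le_one[of "x/2"] sin_ge_minus_one[of "x/2"] by auto
    have d1: "((\<lambda>y. integral {-1..y} e) has_real_derivative e (sin (x/2))) (at (sin (x/2)) within {-1..1})"
      by (rule integral_has_real_derivative[OF econt sx])
    have d1': "((\<lambda>y. integral {-1..y} e) has_real_derivative e (sin (x/2))) (at (sin (x/2)) within ((\<lambda>\<theta>. sin (\<theta>/2)) ` {-pi..pi}))"
      by (rule DERIV_subset[OF d1]) auto
    have d2: "((\<lambda>\<theta>. sin (\<theta>/2)) has_real_derivative cos (x/2) * (1/2)) (at x within {-pi..pi})"
      by (auto intro!: derivative_eq_intros)
    have d3: "((\<lambda>y. integral {-1..y} e) \<circ> (\<lambda>\<theta>. sin (\<theta>/2)) has_real_derivative e (sin (x/2)) * (cos (x/2) * (1/2))) (at x within {-pi..pi})"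
      by (rule DERIV_image_chain[OF d1' d2])
    have d4: "(F has_real_derivative (2 / pi) * (e (sin (x/2)) * (cos (x/2) * (1/2)))) (at x within {-pi..pi})"
      unfolding F_def using DERIV_cmult[OF d3, of "2/pi"] by (simp add: o_def)
    have "(2 / pi) * (e (sin (x/2)) * (cos (x/2) * (1/2))) = g x" by (simp add: e_def g_def)
    then show "(F has_vector_derivative g x) (at x within {-pi..pi})"
      using d4 by (simp add: has_real_derivative_iff_has_vector_derivative)
  qed simp
  have Fpi: "F pi - F (-pi) = (2 / pi) * integral {-1..1} e" by (simp add: F_def)
  have fe: "f = (\<lambda>\<theta>. (\<Prod>j=1..n. 1 - 2 * p j * (1 - cos \<theta>)) * (1 + cos \<theta>) * (1 / (2 * pi)))"
    unfolding f_def by (rule ext) simp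
  have pc: "continuous_on {-pi..pi} (\<lambda>\<theta>. \<Prod>j=1..n. 1 - 2 * p j * (1 - cos \<theta>))"
  proof (rule continuous_on_prod)
    fix j show "continuous_on {-pi..pi} (\<lambda>\<theta>. 1 - 2 * p j * (1 - cos \<theta>))"
      by (intro continuous_on_diff continuous_on_mult continuous_on_const continuous_on_cos continuous_on_id)
  qed
  have fint: "f integrable_on {-pi..pi}" unfolding fe
    by (intro integrable_continuous_interval continuous_on_mult pc continuous_on_add continuous_on_const continuous_on_cos continuous_on_id)
  have "integral {-pi..pi} f \<le> integral {-pi..pi} g"
    using fint G fg by (intro integral_le) auto
  also have "\<dots> = (2 / pi) * integral {-1..1} e" using G Fpi by (simp add: integral_unique)
  also have "\<dots> \<le> (2 / pi) * sqrt (pi / (4 * \<sigma>))"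
    using gauss_bound[of "4 * \<sigma>"] sigpos unfolding e_def by (intro mult_left_mono) auto
  also have "\<dots> = 1 / sqrt (pi * \<sigma>)"
  proof -
    have "sqrt (pi / (4 * \<sigma>)) = sqrt pi / (2 * sqrt \<sigma>)"
      by (simp add: real_sqrt_divide real_sqrt_mult)
    moreover have "sqrt (pi * \<sigma>) = sqrt pi * sqrt \<sigma>" by (simp add: real_sqrt_mult)
    moreover have "pi = sqrt pi * sqrt pi" by simp
    moreover have "sqrt \<sigma> > 0" "sqrt pi > 0" using sigpos by auto
    moreover have "(2 / (sqrt pi * sqrt pi)) * (sqrt pi / (2 * sqrt \<sigma>)) = 1 / (sqrt pi * sqrt \<sigma>)"
      using sigpos by (simp add: field_simps)
    ultimately show ?thesis by simp
  qed
  finally show ?thesis by (simp add: f_def)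
qed



lemma liminf_bounds:
  fixes f :: "nat \<Rightarrow> real"
  assumes b: "\<And>T. T \<ge> 1 \<Longrightarrow> a - b / real T \<le> f T \<and> f T \<le> c + b / real T"
  shows "a \<le> real_of_ereal (liminf (\<lambda>T. ereal (f T))) \<and> real_of_ereal (liminf (\<lambda>T. ereal (f T))) \<le> c"
proof -
  have ev1: "eventually (\<lambda>T. ereal (a - b / real T) \<le> ereal (f T)) sequentially"
    using b by (intro eventually_sequentiallyI[of 1]) auto
  have ev2: "eventually (\<lambda>T. ereal (f T) \<le> ereal (c + b / real T)) sequentially"
    using b by (intro eventually_sequentiallyI[of 1]) auto
  have t1: "((\<lambda>T. ereal (a - b / real T)) \<longlongrightarrow> ereal a) sequentially"
    using tendsto_diff[OF tendsto_const[of a] lim_const_over_n[of b]] by (simp add: lim_ereal)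
  have t2: "((\<lambda>T. ereal (c + b / real T)) \<longlongrightarrow> ereal c) sequentially"
    using tendsto_add[OF tendsto_const[of c] lim_const_over_n[of b]] by (simp add: lim_ereal)
  have l1: "ereal a \<le> liminf (\<lambda>T. ereal (f T))"
    using Liminf_mono[OF ev1] lim_imp_Liminf[OF trivial_limit_sequentially t1] by simp
  have l2: "liminf (\<lambda>T. ereal (f T)) \<le> ereal c"
    using Liminf_mono[OF ev2] lim_imp_Liminf[OF trivial_limit_sequentially t2] by simp
  show ?thesis
  proof (cases "liminf (\<lambda>T. ereal (f T))")
    case (real x) then show ?thesis using l1 l2 by simp
  next
    case PInf then show ?thesis using l2 by simp
  next
    case MInf then show ?thesis using l1 by simp
  qed
qed

lemma row_bound:
  fixes P :: "'s::finite \<Rightarrow> 'a::finite \<Rightarrow> 's \<Rightarrow> real"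
  assumes "is_mdp P"
  shows "\<bar>\<Sum>s'\<in>UNIV. P s a s' * U s'\<bar> \<le> sup_norm U"
proof -
  have "\<bar>\<Sum>s'\<in>UNIV. P s a s' * U s'\<bar> \<le> (\<Sum>s'\<in>UNIV. \<bar>P s a s' * U s'\<bar>)" by (rule sum_abs)
  also have "\<dots> \<le> (\<Sum>s'\<in>UNIV. P s a s' * sup_norm U)"
    using assms by (intro sum_mono) (auto simp: is_mdp_def abs_mult intro: mult_left_mono sn_ge)
  also have "\<dots> = sup_norm U" using assms by (simp add: is_mdp_def sum_distrib_right[symmetric])
  finally show ?thesis .
qed

lemma Pp_bound:
  fixes P :: "'s::finite \<Rightarrow> 'a::finite \<Rightarrow> 's \<Rightarrow> real"
  assumes "is_mdp P" "is_policy pol"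
  shows "\<bar>P_pol P pol U s\<bar> \<le> sup_norm U"
proof -
  have "\<bar>P_pol P pol U s\<bar> \<le> (\<Sum>a\<in>UNIV. \<bar>pol s a * (\<Sum>s'\<in>UNIV. P s a s' * U s')\<bar>)"
    unfolding P_pol_def by (rule sum_abs)
  also have "\<dots> \<le> (\<Sum>a\<in>UNIV. pol s a * sup_norm U)"
    using assms row_bound[OF assms(1)] by (intro sum_mono) (auto simp: is_policy_def abs_mult intro: mult_left_mono)
  also have "\<dots> = sup_norm U" using assms by (simp add: is_policy_def sum_distrib_right[symmetric])
  finally show ?thesis .
qed

lemma Pp_lin: "P_pol P pol (\<lambda>s. a * U s + b * W s) = (\<lambda>s. a * P_pol P pol U s + b * P_pol P pol W s)"
  unfolding P_pol_def
  by (rule ext) (simp add: sum.distrib sum_distrib_left algebra_simps)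

lemma Ppow_lin: "(P_pol P pol ^^ t) (\<lambda>s. a * U s + b * W s) = (\<lambda>s. a * (P_pol P pol ^^ t) U s + b * (P_pol P pol ^^ t) W s)"
  by (induction t) (simp_all add: Pp_lin)

lemma Ppow_bound:
  fixes P :: "'s::finite \<Rightarrow> 'a::finite \<Rightarrow> 's \<Rightarrow> real"
  assumes "is_mdp P" "is_policy pol"
  shows "\<bar>(P_pol P pol ^^ t) U s\<bar> \<le> sup_norm U"
proof (induction t arbitrary: s)
  case 0 then show ?case by (simp add: sn_ge)
next
  case (Suc t)
  have "\<bar>P_pol P pol ((P_pol P pol ^^ t) U) s\<bar> \<le> sup_norm ((P_pol P pol ^^ t) U)" by (rule Pp_bound[OF assms])
  also have "\<dots> \<le> sup_norm U" by (rule sn_le) (rule Suc.IH)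
  finally show ?case by simp
qed

lemma Max_diff:
  fixes f g :: "'a \<Rightarrow> real"
  assumes "finite A" "A \<noteq> {}" "\<And>a. a \<in> A \<Longrightarrow> \<bar>f a - g a\<bar> \<le> B"
  shows "\<bar>Max (f ` A) - Max (g ` A)\<bar> \<le> B"
proof -
  have "Max (f ` A) \<in> f ` A" using assms by (intro Max_in) auto
  then obtain a1 where a1: "a1 \<in> A" "Max (f ` A) = f a1" by auto
  have "Max (g ` A) \<in> g ` A" using assms by (intro Max_in) auto
  then obtain a2 where a2: "a2 \<in> A" "Max (g ` A) = g a2" by auto
  have "f a1 \<le> g a1 + B" using assms(3)[OF a1(1)] by auto
  also have "g a1 \<le> Max (g ` A)" using a1 assms by auto
  finally have u: "Max (f ` A) \<le> Max (g ` A) + B" using a1 by simp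
  have "g a2 \<le> f a2 + B" using assms(3)[OF a2(1)] by auto
  also have "f a2 \<le> Max (f ` A)" using a2 assms by auto
  finally have v: "Max (g ` A) \<le> Max (f ` A) + B" using a2 by simp
  show ?thesis using u v by linarith
qed

lemma T_nonexp:
  fixes P :: "'s::finite \<Rightarrow> 'a::finite \<Rightarrow> 's \<Rightarrow> real"
  assumes "is_mdp P"
  shows "sup_norm (\<lambda>s. T_op P r U s - T_op P r W s) \<le> sup_norm (\<lambda>s. U s - W s)"
proof (rule sn_le)
  fix s
  show "\<bar>T_op P r U s - T_op P r W s\<bar> \<le> sup_norm (\<lambda>s. U s - W s)"
    unfolding T_op_def
  proof (rule Max_diff)
    fix a
    have "(r s a + (\<Sum>s'\<in>UNIV. P s a s' * U s')) - (r s a + (\<Sum>s'\<in>UNIV. P s a s' * W s')) = (\<Sum>s'\<in>UNIV. P s a s' * (U s' - W s'))"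
      by (simp add: sum_subtractf algebra_simps)
    then show "\<bar>(r s a + (\<Sum>s'\<in>UNIV. P s a s' * U s')) - (r s a + (\<Sum>s'\<in>UNIV. P s a s' * W s'))\<bar> \<le> sup_norm (\<lambda>s. U s - W s)"
      using row_bound[OF assms, of s a "\<lambda>s. U s - W s"] by simp
  qed auto
qed

lemma T_shift:
  fixes P :: "'s::finite \<Rightarrow> 'a::finite \<Rightarrow> 's \<Rightarrow> real"
  assumes row: "\<And>s a. (\<Sum>s'\<in>UNIV. P s a s' * g s') = g s"
  shows "T_op P r (\<lambda>s. U s + t * g s) = (\<lambda>s. T_op P r U s + t * g s)"
proof
  fix s
  have e0: "\<And>a. r s a + (\<Sum>s'\<in>UNIV. P s a s' * (U s' + t * g s')) = (r s a + (\<Sum>s'\<in>UNIV. P s a s' * U s')) + t * g s"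
  proof -
    fix a
    have "(\<Sum>s'\<in>UNIV. P s a s' * (U s' + t * g s')) = (\<Sum>s'\<in>UNIV. P s a s' * U s') + t * (\<Sum>s'\<in>UNIV. P s a s' * g s')"
      by (simp add: sum.distrib sum_distrib_left algebra_simps)
    then show "r s a + (\<Sum>s'\<in>UNIV. P s a s' * (U s' + t * g s')) = (r s a + (\<Sum>s'\<in>UNIV. P s a s' * U s')) + t * g s"
      using row[of s a] by simp
  qed
  have e: "(\<lambda>a. r s a + (\<Sum>s'\<in>UNIV. P s a s' * (U s' + t * g s'))) = (\<lambda>a. (r s a + (\<Sum>s'\<in>UNIV. P s a s' * U s')) + t * g s)"
    by (rule ext) (rule e0)
  show "T_op P r (\<lambda>s. U s + t * g s) s = T_op P r U s + t * g s"
    unfolding T_op_def e by (rule Max_add_commute) auto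
qed



lemma gain_lower:
  fixes P :: "'s::finite \<Rightarrow> 'a::finite \<Rightarrow> 's \<Rightarrow> real"
  assumes mdp: "is_mdp P" and pol: "is_policy pol"
    and inv: "P_pol P pol g = g"
    and gr: "T_pol P r pol W = T_op P r W"
  shows "\<bar>g s - gain P r pol s\<bar> \<le> sup_norm (\<lambda>s. T_op P r W s - W s - g s)"
proof -
  define Pp where "Pp = P_pol P pol"
  define E where "E = (\<lambda>s. T_op P r W s - W s - g s)"
  define eps where "eps = sup_norm E"
  define M where "M = sup_norm W"
  have rp: "r_pol r pol = (\<lambda>s. 1 * (\<lambda>s. 1 * W s + (-1) * Pp W s) s + 1 * (\<lambda>s. 1 * g s + 1 * E s) s)"
  proof
    fix s
    have "r_pol r pol s + Pp W s = T_op P r W s" using fun_cong[OF gr, of s] by (simp add: T_pol_def Pp_def)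
    then show "r_pol r pol s = 1 * (\<lambda>s. 1 * W s + (-1) * Pp W s) s + 1 * (\<lambda>s. 1 * g s + 1 * E s) s"
      by (simp add: E_def)
  qed
  have powg: "(Pp ^^ t) g = g" for t
    by (induction t) (simp_all add: Pp_def inv)
  have tm: "(Pp ^^ t) (r_pol r pol) s = (Pp ^^ t) W s - (Pp ^^ Suc t) W s + (g s + (Pp ^^ t) E s)" for t
  proof -
    have "(Pp ^^ t) (r_pol r pol) s = (Pp ^^ t) W s - (Pp ^^ t) (Pp W) s + (g s + (Pp ^^ t) E s)"
      unfolding rp Pp_def Ppow_lin by (simp add: powg[unfolded Pp_def])
    also have "(Pp ^^ t) (Pp W) = (Pp ^^ Suc t) W" by (simp only: funpow_Suc_right comp_def)
    finally show ?thesis .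
  qed
  have sumeq: "(\<Sum>t<T. (Pp ^^ t) (r_pol r pol) s) = W s - (Pp ^^ T) W s + (real T * g s + (\<Sum>t<T. (Pp ^^ t) E s))" for T
  proof -
    have "(\<Sum>t<T. (Pp ^^ t) (r_pol r pol) s) = (\<Sum>t<T. (Pp ^^ t) W s - (Pp ^^ Suc t) W s) + (\<Sum>t<T. g s + (Pp ^^ t) E s)"
      unfolding tm by (rule sum.distrib)
    also have "(\<Sum>t<T. (Pp ^^ t) W s - (Pp ^^ Suc t) W s) = (Pp ^^ 0) W s - (Pp ^^ T) W s"
      by (rule sum_lessThan_telescope')
    also have "(\<Sum>t<T. g s + (Pp ^^ t) E s) = real T * g s + (\<Sum>t<T. (Pp ^^ t) E s)"
      by (simp add: sum.distrib)
    finally show ?thesis by simp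
  qed
  have bW: "\<bar>W s - (Pp ^^ T) W s\<bar> \<le> 2 * M" for T
    using sn_ge[of W s] Ppow_bound[OF mdp pol, of T W s] by (simp add: Pp_def M_def)
  have bE: "\<bar>\<Sum>t<T. (Pp ^^ t) E s\<bar> \<le> real T * eps" for T
  proof -
    have "\<bar>\<Sum>t<T. (Pp ^^ t) E s\<bar> \<le> (\<Sum>t<T. \<bar>(Pp ^^ t) E s\<bar>)" by (rule sum_abs)
    also have "\<dots> \<le> (\<Sum>t<T. eps)" using Ppow_bound[OF mdp pol] by (intro sum_mono) (simp add: Pp_def eps_def)
    finally show ?thesis by simp
  qed
  have avg: "g s - eps - 2 * M / real T \<le> (1 / real T) * (\<Sum>t<T. (Pp ^^ t) (r_pol r pol) s)
      \<and> (1 / real T) * (\<Sum>t<T. (Pp ^^ t) (r_pol r pol) s) \<le> g s + eps + 2 * M / real T" if T: "T \<ge> 1" for T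
  proof -
    have Tp: "real T > 0" using T by simp
    have alg: "(1 / real T) * (X + (real T * G + Y)) = G + X / real T + Y / real T" for X Y G
      using Tp by (simp add: field_simps)
    define X where "X = W s - (Pp ^^ T) W s"
    define Y where "Y = (\<Sum>t<T. (Pp ^^ t) E s)"
    have e: "(1 / real T) * (\<Sum>t<T. (Pp ^^ t) (r_pol r pol) s) = g s + X / real T + Y / real T"
      unfolding sumeq X_def Y_def by (rule alg)
    have b1: "\<bar>X / real T\<bar> \<le> 2 * M / real T"
      unfolding abs_divide using bW[of T] Tp by (simp add: X_def divide_right_mono)
    have b2: "\<bar>Y / real T\<bar> \<le> eps"
      unfolding abs_divide using bE[of T] Tp by (simp add: Y_def pos_divide_le_eq mult.commute)
    show ?thesis unfolding e using abs_le_D1[OF b1] abs_le_D2[OF b1] abs_le_D1[OF b2] abs_le_D2[OF b2]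
      by linarith
  qed
  have "g s - eps \<le> gain P r pol s \<and> gain P r pol s \<le> g s + eps"
    unfolding gain_def by (rule liminf_bounds) (use avg in \<open>simp only: Pp_def\<close>)
  then show ?thesis unfolding eps_def E_def using abs_le_iff by (metis abs_diff_le_iff abs_minus_commute)
qed

lemma gain_bdd:
  fixes P :: "'s::finite \<Rightarrow> 'a::finite \<Rightarrow> 's \<Rightarrow> real"
  assumes mdp: "is_mdp P" and pol: "is_policy pol"
  shows "gain P r pol s \<le> (\<Sum>s\<in>UNIV. \<Sum>a\<in>UNIV. \<bar>r s a\<bar>)"
proof -
  define Mr where "Mr = (\<Sum>s\<in>UNIV. \<Sum>a\<in>UNIV. \<bar>r s a\<bar>)"
  have ra: "\<bar>r s a\<bar> \<le> Mr" for s a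
  proof -
    have "\<bar>r s a\<bar> \<le> (\<Sum>a\<in>UNIV. \<bar>r s a\<bar>)" by (rule member_le_sum) auto
    also have "\<dots> \<le> Mr" unfolding Mr_def by (rule member_le_sum[of s UNIV "\<lambda>s. \<Sum>a\<in>UNIV. \<bar>r s a\<bar>"]) (auto intro: sum_nonneg)
    finally show ?thesis .
  qed
  have rp: "\<bar>r_pol r pol s\<bar> \<le> Mr" for s
  proof -
    have "\<bar>r_pol r pol s\<bar> \<le> (\<Sum>a\<in>UNIV. \<bar>pol s a * r s a\<bar>)" unfolding r_pol_def by (rule sum_abs)
    also have "\<dots> \<le> (\<Sum>a\<in>UNIV. pol s a * Mr)"
      using pol ra by (intro sum_mono) (auto simp: is_policy_def abs_mult intro: mult_left_mono)
    also have "\<dots> = Mr" using pol by (simp add: is_policy_def sum_distrib_right[symmetric])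
    finally show ?thesis .
  qed
  have Mr0: "0 \<le> Mr" unfolding Mr_def by (auto intro: sum_nonneg)
  have snr: "sup_norm (r_pol r pol) \<le> Mr" by (rule sn_le) (rule rp)
  have avg: "- Mr - 0 / real T \<le> (1 / real T) * (\<Sum>t<T. (P_pol P pol ^^ t) (r_pol r pol) s)
      \<and> (1 / real T) * (\<Sum>t<T. (P_pol P pol ^^ t) (r_pol r pol) s) \<le> Mr + 0 / real T" if T: "T \<ge> 1" for T
  proof -
    have "\<bar>\<Sum>t<T. (P_pol P pol ^^ t) (r_pol r pol) s\<bar> \<le> (\<Sum>t<T. \<bar>(P_pol P pol ^^ t) (r_pol r pol) s\<bar>)" by (rule sum_abs)
    also have "\<dots> \<le> (\<Sum>t<T. Mr)" using Ppow_bound[OF mdp pol] snr by (intro sum_mono) (meson order_trans)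
    finally have "\<bar>\<Sum>t<T. (P_pol P pol ^^ t) (r_pol r pol) s\<bar> \<le> real T * Mr" by simp
    then have ab: "\<bar>(1 / real T) * (\<Sum>t<T. (P_pol P pol ^^ t) (r_pol r pol) s)\<bar> \<le> Mr"
      using T by (simp add: abs_mult field_simps)
    have A: "(1 / real T) * (\<Sum>t<T. (P_pol P pol ^^ t) (r_pol r pol) s) \<le> Mr" using abs_le_D1[OF ab] .
    have B: "- ((1 / real T) * (\<Sum>t<T. (P_pol P pol ^^ t) (r_pol r pol) s)) \<le> Mr" using abs_le_D2[OF ab] .
    show ?thesis using A B by linarith
  qed
  show ?thesis unfolding gain_def Mr_def[symmetric]
    using liminf_bounds[of "- Mr" 0 _ Mr] avg by simp
qed

theorem corollary4:
  fixes P :: "'s::finite \<Rightarrow> 'a::finite \<Rightarrow> 's \<Rightarrow> real"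
    and r :: "'s \<Rightarrow> 'a \<Rightarrow> real"
    and h :: "'s \<Rightarrow> real"
    and lam :: "nat \<Rightarrow> real"
    and V :: "nat \<Rightarrow> 's \<Rightarrow> real"
    and pols :: "nat \<Rightarrow> 's \<Rightarrow> 'a \<Rightarrow> real"
    and k :: nat
  assumes mdp: "is_mdp P"
    and invariant: "\<And>pol. is_policy pol \<Longrightarrow> P_pol P pol (gstar P r) = gstar P r"
    and bellman: "modified_bellman P r (gstar P r) h"
    and lam_bounds: "\<And>j. j \<ge> 1 \<Longrightarrow> 0 < lam j \<and> lam j < 1"
    and V_rec: "\<And>k. k \<ge> 1 \<Longrightarrow>
        V k = (\<lambda>s. lam k * V (k - 1) s + (1 - lam k) * T_op P r (V (k - 1)) s)"
    and greedy: "\<And>k. k \<ge> 1 \<Longrightarrow> is_policy (pols k) \<and> T_pol P r (pols k) (V k) = T_op P r (V k)"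
    and k_pos: "k \<ge> 1"
  shows "sup_norm (\<lambda>s. gstar P r s - gain P r (pols k) s)
           \<le> sup_norm (\<lambda>s. T_op P r (V k) s - V k s - gstar P r s)
       \<and> sup_norm (\<lambda>s. T_op P r (V k) s - V k s - gstar P r s)
           \<le> 2 * sup_norm (\<lambda>s. V 0 s - h s) / sqrt (pi * (\<Sum>i=1..k. lam i * (1 - lam i)))"
proof -
  define g where "g = gstar P r"
  define Top where "Top = T_op P r"
  have row: "(\<Sum>s'\<in>UNIV. P s a s' * g s') = g s" for s a
  proof -
    define pol where "pol = (\<lambda>(s::'s) b. if b = a then 1 else (0::real))"
    have "is_policy pol" by (simp add: is_policy_def pol_def)
    then have "P_pol P pol g s = g s" using invariant g_def by simp
    moreover have "P_pol P pol g s = (\<Sum>aa\<in>UNIV. if aa = a then (\<Sum>s'\<in>UNIV. P s aa s' * g s') else 0)"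
      unfolding P_pol_def pol_def by (rule sum.cong) auto
    ultimately show ?thesis by simp
  qed
  have pk: "is_policy (pols k)" "T_pol P r (pols k) (V k) = T_op P r (V k)" using greedy k_pos by auto
  have gup: "gain P r (pols k) s \<le> g s" for s
  proof -
    have "bdd_above ((\<lambda>pol. gain P r pol s) ` {pol. is_policy pol})"
      using gain_bdd[OF mdp] by (intro bdd_aboveI[where M="\<Sum>s\<in>UNIV. \<Sum>a\<in>UNIV. \<bar>r s a\<bar>"]) auto
    then show ?thesis unfolding g_def gstar_def using pk(1) by (intro cSUP_upper) auto
  qed
  have part1: "sup_norm (\<lambda>s. g s - gain P r (pols k) s) \<le> sup_norm (\<lambda>s. T_op P r (V k) s - V k s - g s)"
  proof (rule sn_le)
    fix s
    show "\<bar>g s - gain P r (pols k) s\<bar> \<le> sup_norm (\<lambda>s. T_op P r (V k) s - V k s - g s)"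
      by (rule gain_lower[OF mdp pk(1) _ pk(2)]) (simp add: g_def invariant[OF pk(1)])
  qed
  have fixh: "Top h = (\<lambda>s. h s + g s)"
    using bellman unfolding modified_bellman_def Top_def T_op_def g_def by auto
  define mu where "mu = (\<lambda>j::nat. if j = 0 then 1/2 else 1 - lam j)"
  define tau where "tau = (\<lambda>k. \<Sum>j=1..k. (1 - lam j))"
  define x where "x = (\<lambda>k s. V k s - tau k * g s)"
  define F where "F = (\<lambda>U s. Top U s - g s)"
  have Vx: "V k = (\<lambda>s. x k s + tau k * g s)" for k by (simp add: x_def)
  have shift: "Top (\<lambda>s. U s + t * g s) = (\<lambda>s. Top U s + t * g s)" for U t
    unfolding Top_def by (rule T_shift) (rule row)
  have rec: "x (Suc k) = (\<lambda>s. (1 - mu (Suc k)) * x k s + mu (Suc k) * F (x k) s)" for k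
  proof
    fix s
    have "V (Suc k) s = lam (Suc k) * V k s + (1 - lam (Suc k)) * Top (V k) s"
      using V_rec[of "Suc k"] by (simp add: Top_def)
    also have "Top (V k) s = Top (x k) s + tau k * g s" by (simp add: Vx shift)
    finally have "V (Suc k) s = lam (Suc k) * (x k s + tau k * g s) + (1 - lam (Suc k)) * (Top (x k) s + tau k * g s)"
      by (simp add: x_def)
    moreover have tS: "tau (Suc k) = tau k + (1 - lam (Suc k))" by (simp add: tau_def)
    ultimately show "x (Suc k) s = (1 - mu (Suc k)) * x k s + mu (Suc k) * F (x k) s"
      by (simp add: x_def mu_def F_def tS algebra_simps)
  qed
  have KMb: "sup_norm (\<lambda>s. F (x k) s - x k s) \<le> 2 * sup_norm (\<lambda>s. x 0 s - h s) * Hb mu k k 1"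
  proof (rule KM[where F=F])
    show "sup_norm (\<lambda>s. F U s - F W s) \<le> sup_norm (\<lambda>s. U s - W s)" for U W
      using T_nonexp[OF mdp, of r U W] by (simp add: F_def Top_def)
    show "F h = h" by (rule ext) (simp add: F_def fixh)
    show "x (Suc k) = (\<lambda>s. (1 - mu (Suc k)) * x k s + mu (Suc k) * F (x k) s)" for k by (rule rec)
    show "0 \<le> mu j \<and> mu j \<le> 1" for j
      using lam_bounds[of j] by (cases "j = 0") (auto simp: mu_def)
  qed
  have eq1: "(\<lambda>s. F (x k) s - x k s) = (\<lambda>s. T_op P r (V k) s - V k s - g s)"
    by (rule ext) (simp add: F_def Vx shift Top_def[symmetric])
  have x0: "(\<lambda>s. x 0 s - h s) = (\<lambda>s. V 0 s - h s)" by (simp add: x_def tau_def)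
  define p where "p = (\<lambda>j. mu j * (1 - mu j))"
  define sig where "sig = (\<Sum>i=1..k. lam i * (1 - lam i))"
  have sig_eq: "sig = (\<Sum>j=1..k. p j)"
    unfolding sig_def p_def by (rule sum.cong) (auto simp: mu_def algebra_simps)
  have sigpos: "sig > 0" unfolding sig_def
  proof (rule sum_pos2[of _ 1])
    show "0 < lam 1 * (1 - lam 1)" using lam_bounds[of 1] by auto
    show "0 \<le> lam i * (1 - lam i)" if "i \<in> {1..k}" for i using lam_bounds[of i] that by auto
  qed (use k_pos in auto)
  have pb: "0 \<le> p j \<and> p j \<le> 1/4" for j
  proof -
    have "0 \<le> mu j \<and> mu j \<le> 1" using lam_bounds[of j] by (cases "j = 0") (auto simp: mu_def)
    moreover have "mu j * (1 - mu j) \<le> 1/4"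
      using sum_squares_ge_zero[of "mu j - 1/2" 0] by (simp add: power2_eq_square algebra_simps)
    ultimately show ?thesis by (simp add: p_def)
  qed
  have Hbnd: "Hb mu k k 1 \<le> 1 / sqrt (pi * sig)"
    unfolding Hb_diag1 Eop_Vind1 p_def[symmetric]
    by (rule int_bound[OF pb sig_eq sigpos])
  have R0: "0 \<le> sup_norm (\<lambda>s. V 0 s - h s)" by (rule sn_nonneg)
  have part2: "sup_norm (\<lambda>s. T_op P r (V k) s - V k s - g s) \<le> 2 * sup_norm (\<lambda>s. V 0 s - h s) / sqrt (pi * sig)"
  proof -
    have "sup_norm (\<lambda>s. T_op P r (V k) s - V k s - g s) \<le> 2 * sup_norm (\<lambda>s. V 0 s - h s) * Hb mu k k 1"
      using KMb unfolding eq1 x0 .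
    also have "\<dots> \<le> 2 * sup_norm (\<lambda>s. V 0 s - h s) * (1 / sqrt (pi * sig))"
      using R0 Hbnd by (intro mult_left_mono) auto
    finally show ?thesis by simp
  qed
  show ?thesis using part1 part2 by (simp add: g_def sig_def)
qed

end
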